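(* Let $p>2$ and let $r=p/(p-1)$. Let $x=\sum_{i=1}^m\lambda_ie_i\in\mathbb{R}^m$ with $\|x\|_p=1$ and $\lambda_i\neq0$ for all $i\in\{1,\dots,m\}$, and let $d\in\mathbb{R}^m$ be given by $d_i=\operatorname{sign}(\lambda_i)|\lambda_i|^{p-1}$ (the unique vector with $\|d\|_r=1$ in the normal cone of the unit $\ell_p$ ball at $x$). Then there exists $\alpha>0$ such that the unit $\ell_p$ ball $\ell_p(1)=\{y:\|y\|_p\leq1\}$ is $(\alpha,2)$-locally uniformly convex at $x$ with respect to $d$, i.e. for every $\epsilon\in[0,2]$, $\inf\{\langle d,x-y\rangle: y\in\ell_p(1),\ \|x-y\|_p\geq\epsilon\}\geq\alpha\epsilon^2$; equivalently, $\langle d,x-y\rangle\geq\alpha\|x-y\|_p^2$ for all $y\in\ell_p(1)$.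
   Context: $e_1,\dots,e_m$ is the canonical basis of $\mathbb{R}^m$ and $\|\cdot\|_p$ the $\ell_p$ norm; its dual norm is $\|\cdot\|_r$ with $1/p+1/r=1$. *)

theory Defs
  imports "HOL-Analysis.Analysis"
begin

definition lp_norm :: "real \<Rightarrow> real^'m \<Rightarrow> real" where
  "lp_norm p x = (\<Sum>i\<in>UNIV. \<bar>x $ i\<bar> powr p) powr (1 / p)"

definition lp_ball :: "real \<Rightarrow> (real^'m) set" where
  "lp_ball p = {y. lp_norm p y \<le> 1}"

text \<open>(alpha,q)-local uniform convexity of K at x w.r.t. d, measured in the norm nrm:
  for every eps in [0,2], the infimum of <d, x - y> over y in K with nrm (x - y) \<ge> eps
  is at least alpha * eps^q (infimum of the empty set read as +infinity).\<close>
definition locally_uniformly_convex_at ::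
  "real \<Rightarrow> nat \<Rightarrow> (real^'m) set \<Rightarrow> (real^'m \<Rightarrow> real) \<Rightarrow> real^'m \<Rightarrow> real^'m \<Rightarrow> bool" where
  "locally_uniformly_convex_at \<alpha> q K nrm x d \<longleftrightarrow>
     (\<forall>\<epsilon>\<in>{0..2}. \<forall>y\<in>K. nrm (x - y) \<ge> \<epsilon> \<longrightarrow> d \<bullet> (x - y) \<ge> \<alpha> * \<epsilon> ^ q)"

end

theory Submission
  imports Defs
begin

lemma taylor_part:
  fixes p a t :: real
  assumes p: "p > 2" and a: "a > 0" and t: "t \<ge> a/2"
  shows "t powr p \<ge> a powr p + p * a powr (p-1) * (t - a) + (p*(p-1)/2 * (a/2) powr (p-2)) * (t-a)^2"
proof (cases "t = a")
  case True thus ?thesis by simp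
next
  case False
  define diff where "diff = (\<lambda>m::nat. \<lambda>s::real. if m = 0 then s powr p else if m = 1 then p * s powr (p-1) else p*(p-1)* s powr (p-2))"
  have D: "\<forall>(m::nat) (s::real). m < 2 \<and> a/2 \<le> s \<and> s \<le> max t a \<longrightarrow> DERIV (diff m) s :> diff (Suc m) s"
  proof (intro allI impI)
    fix m :: nat and s :: real assume h: "m < 2 \<and> a/2 \<le> s \<and> s \<le> max t a"
    hence s: "s > 0" using a by linarith
    show "DERIV (diff m) s :> diff (Suc m) s"
    proof (cases "m = 0")
      case True
      then show ?thesis unfolding diff_def using has_real_derivative_powr[OF s, of p] by simp
    next
      case False
      hence m: "m = 1" using h by auto
      have "DERIV (\<lambda>s. p * s powr (p-1)) s :> p * ((p-1) * s powr (p-1-1))"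
        by (intro DERIV_cmult has_real_derivative_powr s)
      moreover have "p - 1 - 1 = p - 2" by simp
      ultimately show ?thesis unfolding diff_def using m by (simp add: algebra_simps)
    qed
  qed
  obtain \<xi> where xi: "(if t < a then t < \<xi> \<and> \<xi> < a else a < \<xi> \<and> \<xi> < t)"
    and eq: "diff 0 t = (\<Sum>m<2. (diff m a / fact m) * (t - a)^m) + (diff 2 \<xi> / fact 2) * (t - a)^2"
    using Taylor[of 2 diff "diff 0" "a/2" "max t a" a t, OF _ refl D] a t False by auto
  have xi2: "\<xi> \<ge> a/2" using xi t a by (auto split: if_splits)
  have "(a/2) powr (p-2) \<le> \<xi> powr (p-2)" using xi2 a p by (intro powr_mono2) auto
  hence "p*(p-1)/2 * (a/2) powr (p-2) * (t-a)^2 \<le> p*(p-1)/2 * \<xi> powr (p-2) * (t-a)^2"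
    using p by (intro mult_right_mono mult_left_mono) auto
  moreover have "diff 0 t = a powr p + p * a powr (p-1) * (t - a) + p*(p-1)/2 * \<xi> powr (p-2) * (t-a)^2"
    using eq by (simp add: diff_def numeral_2_eq_2 fact_2)
  ultimately show ?thesis by (simp add: diff_def)
qed

definition cc :: "real \<Rightarrow> real \<Rightarrow> real" where
  "cc p a = min ((p/2-1) * a powr p / 4) (p*(p-1)/2 * (a/2) powr (p-2))"

lemma cc_pos: "p > 2 \<Longrightarrow> a > 0 \<Longrightarrow> cc p a > 0"
  unfolding cc_def by (auto intro!: mult_pos_pos divide_pos_pos)

lemma scalar_pos:
  fixes p a t :: real
  assumes p: "p > 2" and a: "a > 0" and t: "\<bar>t - a\<bar> \<le> 2"
  shows "\<bar>t\<bar> powr p \<ge> a powr p + p * a powr (p-1) * (t - a) + cc p a * (t-a)^2"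
proof (cases "t \<ge> a/2")
  case True
  have "cc p a * (t-a)^2 \<le> (p*(p-1)/2 * (a/2) powr (p-2)) * (t-a)^2"
    unfolding cc_def by (intro mult_right_mono) auto
  moreover have "\<bar>t\<bar> = t" using True a by auto
  ultimately show ?thesis using taylor_part[OF p a True] by linarith
next
  case False
  have ap: "a powr (p-1) * a = a powr p" using a by (simp add: powr_mult_base powr_diff)
  have apos: "a powr (p-1) > 0" "a powr p > 0" using a by auto
  have "p * a powr (p-1) * (t - a) \<le> p * a powr (p-1) * (- a/2)"
    using False p apos by (intro mult_left_mono) auto
  also have "\<dots> = - (p/2) * a powr p" using ap by (simp add: algebra_simps)
  finally have h1: "p * a powr (p-1) * (t - a) \<le> - (p/2) * a powr p" .
  have "(t-a)^2 \<le> 4" using t by (metis abs_le_square_iff power2_abs abs_numeral power2_eq_square numeral_times_numeral semiring_norm(12) semiring_norm(13) mult_2 numeral_Bit0) 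
  hence "cc p a * (t-a)^2 \<le> cc p a * 4" using cc_pos[OF p a] by (intro mult_left_mono) auto
  also have "\<dots> \<le> (p/2-1) * a powr p"
  proof -
    have "cc p a \<le> (p/2-1) * a powr p / 4" unfolding cc_def by (rule min.cobounded1)
    thus ?thesis by (simp add: field_simps)
  qed
  finally have "cc p a * (t-a)^2 \<le> (p/2-1) * a powr p" .
  moreover have "\<bar>t\<bar> powr p \<ge> 0" by simp
  moreover have "(p/2-1)*a powr p + (- (p/2) * a powr p) = - (a powr p)" by (simp add: algebra_simps)
  ultimately show ?thesis using h1 by linarith
qed

lemma scalar:
  fixes p a t :: real
  assumes p: "p > 2" and a: "a \<noteq> 0" and t: "\<bar>t - a\<bar> \<le> 2"
  shows "\<bar>t\<bar> powr p \<ge> \<bar>a\<bar> powr p + p * (sgn a * \<bar>a\<bar> powr (p-1)) * (t - a) + cc p \<bar>a\<bar> * (t-a)^2"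
proof (cases "a > 0")
  case True
  then show ?thesis using scalar_pos[OF p True t] by simp
next
  case False
  hence a': "-a > 0" using a by auto
  have t': "\<bar>(-t) - (-a)\<bar> \<le> 2" using t by simp
  have "\<bar>-t\<bar> powr p \<ge> (-a) powr p + p * (-a) powr (p-1) * ((-t) - (-a)) + cc p (-a) * ((-t)-(-a))^2"
    by (rule scalar_pos[OF p a' t'])
  moreover have "\<bar>a\<bar> = -a" "sgn a = -1" using False a by auto
  ultimately show ?thesis by (simp add: algebra_simps power2_eq_square)
qed

lemma powr_le1_imp: fixes u p :: real assumes "p > 0" "u \<ge> 0" "u powr p \<le> 1" shows "u \<le> 1"
proof (rule ccontr)
  assume "\<not> u \<le> 1"
  hence "1 powr p < u powr p" using assms by (intro powr_less_mono2) auto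
  thus False using assms by simp
qed

lemma powr_eq1_imp: fixes u p :: real assumes "p > 0" "u \<ge> 0" "u powr p = 1" shows "u = 1"
proof (rule ccontr)
  assume "u \<noteq> 1"
  hence "u < 1 \<or> u > 1" by auto
  moreover have "u < 1 \<Longrightarrow> u powr p < 1 powr p" using assms by (intro powr_less_mono2) auto
  moreover have "u > 1 \<Longrightarrow> 1 powr p < u powr p" using assms by (intro powr_less_mono2) auto
  ultimately show False using assms by auto
qed

lemma norm_bound:
  fixes v :: "real^'m" and p :: real
  assumes p: "p > 0"
  shows "(lp_norm p v)^2 \<le> (real CARD('m) powr (1/p))^2 * (\<Sum>i\<in>UNIV. (v$i)^2)"
proof -
  define M where "M = Max (range (\<lambda>i. \<bar>v$i\<bar>))"
  have "M \<in> range (\<lambda>i. \<bar>v$i\<bar>)" unfolding M_def by (intro Max_in) auto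
  then obtain j where j: "M = \<bar>v$j\<bar>" by auto
  have le: "\<bar>v$i\<bar> \<le> \<bar>v$j\<bar>" for i
  proof -
    have "\<bar>v$i\<bar> \<le> M" unfolding M_def by (intro Max_ge) auto
    thus ?thesis using j by simp
  qed
  have "(\<Sum>i\<in>UNIV. \<bar>v$i\<bar> powr p) \<le> (\<Sum>i\<in>(UNIV::'m set). \<bar>v$j\<bar> powr p)"
    using le p by (intro sum_mono powr_mono2) auto
  also have "\<dots> = real CARD('m) * \<bar>v$j\<bar> powr p" by simp
  finally have s: "(\<Sum>i\<in>UNIV. \<bar>v$i\<bar> powr p) \<le> real CARD('m) * \<bar>v$j\<bar> powr p" .
  have "lp_norm p v \<le> (real CARD('m) * \<bar>v$j\<bar> powr p) powr (1/p)"
    unfolding lp_norm_def using s p by (intro powr_mono2) (auto intro: sum_nonneg)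
  also have "\<dots> = real CARD('m) powr (1/p) * \<bar>v$j\<bar>"
    using p by (simp add: powr_mult powr_powr)
  finally have n: "lp_norm p v \<le> real CARD('m) powr (1/p) * \<bar>v$j\<bar>" .
  have n0: "lp_norm p v \<ge> 0" unfolding lp_norm_def by simp
  have "(lp_norm p v)^2 \<le> (real CARD('m) powr (1/p) * \<bar>v$j\<bar>)^2"
    using n n0 by (intro power_mono) auto
  also have "\<dots> = (real CARD('m) powr (1/p))^2 * (v$j)^2" by (simp add: power_mult_distrib)
  also have "\<dots> \<le> (real CARD('m) powr (1/p))^2 * (\<Sum>i\<in>UNIV. (v$i)^2)"
    by (intro mult_left_mono member_le_sum) auto
  finally show ?thesis .
qed

theorem mainTheorem2:
  fixes p :: real and x :: "real^'m"
  assumes "p > 2"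
    and "lp_norm p x = 1"
    and "\<forall>i. x $ i \<noteq> 0"
  shows "\<exists>\<alpha>>0. locally_uniformly_convex_at \<alpha> 2 (lp_ball p) (lp_norm p) x
           (\<chi> i. sgn (x $ i) * \<bar>x $ i\<bar> powr (p - 1))"
proof -
  have p: "p > 2" and p0: "p > 0" using assms(1) by auto
  define d :: "real^'m" where "d = (\<chi> i. sgn (x $ i) * \<bar>x $ i\<bar> powr (p - 1))"
  define c0 where "c0 = Min (range (\<lambda>i. cc p \<bar>x$i\<bar>))"
  have c0in: "c0 \<in> range (\<lambda>i. cc p \<bar>x$i\<bar>)" unfolding c0_def by (intro Min_in) auto
  have c0pos: "c0 > 0" using c0in cc_pos[OF p] assms(3) by auto
  have c0le: "c0 \<le> cc p \<bar>x$i\<bar>" for i unfolding c0_def by (intro Min_le) auto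
  define C where "C = (real CARD('m) powr (1/p))^2"
  have Cpos: "C > 0" unfolding C_def by simp
  define \<alpha> where "\<alpha> = c0 / (p * C)"
  have apos: "\<alpha> > 0" unfolding \<alpha>_def by (rule divide_pos_pos[OF c0pos mult_pos_pos[OF p0 Cpos]])
  have Sx: "(\<Sum>i\<in>UNIV. \<bar>x$i\<bar> powr p) = 1"
  proof (rule powr_eq1_imp[of "1/p"])
    show "0 < 1/p" using p0 by simp
    show "0 \<le> (\<Sum>i\<in>UNIV. \<bar>x$i\<bar> powr p)" by (rule sum_nonneg) simp
    show "(\<Sum>i\<in>UNIV. \<bar>x$i\<bar> powr p) powr (1/p) = 1" using assms(2) unfolding lp_norm_def .
  qed
  have key: "d \<bullet> (x - y) \<ge> \<alpha> * (lp_norm p (x - y))^2" if y: "y \<in> lp_ball p" for y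
  proof -
    have Sy: "(\<Sum>i\<in>UNIV. \<bar>y$i\<bar> powr p) \<le> 1"
    proof (rule powr_le1_imp[of "1/p"])
      show "0 < 1/p" using p0 by simp
      show "0 \<le> (\<Sum>i\<in>UNIV. \<bar>y$i\<bar> powr p)" by (rule sum_nonneg) simp
      show "(\<Sum>i\<in>UNIV. \<bar>y$i\<bar> powr p) powr (1/p) \<le> 1" using y unfolding lp_ball_def lp_norm_def by simp
    qed
    have yb: "\<bar>y$i\<bar> \<le> 1" for i
    proof -
      have h: "\<bar>y$i\<bar> powr p \<le> (\<Sum>i\<in>UNIV. \<bar>y$i\<bar> powr p)" by (rule member_le_sum) simp_all
      show ?thesis by (rule powr_le1_imp[OF p0 abs_ge_zero]) (use h Sy in linarith)
    qed
    have xb: "\<bar>x$i\<bar> \<le> 1" for i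
    proof -
      have h: "\<bar>x$i\<bar> powr p \<le> (\<Sum>i\<in>UNIV. \<bar>x$i\<bar> powr p)" by (rule member_le_sum) simp_all
      show ?thesis by (rule powr_le1_imp[OF p0 abs_ge_zero]) (use h Sx in linarith)
    qed
    have pt: "\<bar>y$i\<bar> powr p \<ge> \<bar>x$i\<bar> powr p + p * (d$i) * (y$i - x$i) + c0 * (y$i - x$i)^2" for i
    proof -
      have "\<bar>y$i - x$i\<bar> \<le> 2" using xb[of i] yb[of i] by linarith
      from scalar[OF p assms(3)[rule_format, of i] this]
      have "\<bar>y$i\<bar> powr p \<ge> \<bar>x$i\<bar> powr p + p * (d$i) * (y$i - x$i) + cc p \<bar>x$i\<bar> * (y$i - x$i)^2"
        unfolding d_def by simp
      moreover have "c0 * (y$i - x$i)^2 \<le> cc p \<bar>x$i\<bar> * (y$i - x$i)^2"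
        using c0le by (intro mult_right_mono) auto
      ultimately show ?thesis by linarith
    qed
    have "(\<Sum>i\<in>UNIV. \<bar>x$i\<bar> powr p + p * (d$i) * (y$i - x$i) + c0 * (y$i - x$i)^2) \<le> (\<Sum>i\<in>UNIV. \<bar>y$i\<bar> powr p)"
      using pt by (intro sum_mono) auto
    hence E1: "1 + p * (\<Sum>i\<in>UNIV. d$i * (y$i - x$i)) + c0 * (\<Sum>i\<in>UNIV. (y$i - x$i)^2) \<le> 1"
    proof -
      have "(\<Sum>i\<in>UNIV. \<bar>x$i\<bar> powr p + p * (d$i) * (y$i - x$i) + c0 * (y$i - x$i)^2)
          = (\<Sum>i\<in>UNIV. \<bar>x$i\<bar> powr p) + p * (\<Sum>i\<in>UNIV. d$i * (y$i - x$i)) + c0 * (\<Sum>i\<in>UNIV. (y$i - x$i)^2)"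
        by (simp add: sum.distrib sum_distrib_left mult.assoc)
      thus ?thesis using Sx Sy \<open>(\<Sum>i\<in>UNIV. \<bar>x$i\<bar> powr p + p * (d$i) * (y$i - x$i) + c0 * (y$i - x$i)^2) \<le> (\<Sum>i\<in>UNIV. \<bar>y$i\<bar> powr p)\<close> by linarith
    qed
    have E2: "(\<Sum>i\<in>UNIV. d$i * (y$i - x$i)) = - (d \<bullet> (x - y))"
    proof -
      have "d \<bullet> (x - y) = (\<Sum>i\<in>UNIV. d$i * (x$i - y$i))" unfolding inner_vec_def by simp
      also have "\<dots> = - (\<Sum>i\<in>UNIV. d$i * (y$i - x$i))"
        by (simp add: sum_negf[symmetric] right_diff_distrib)
      finally show ?thesis by simp
    qed
    have E3: "(\<Sum>i\<in>UNIV. (y$i - x$i)^2) = (\<Sum>i\<in>UNIV. ((x - y)$i)^2)"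
      by (intro sum.cong) (auto simp: power2_commute)
    have A: "c0 * (\<Sum>i\<in>UNIV. ((x - y)$i)^2) \<le> p * (d \<bullet> (x - y))" using E1 unfolding E2 E3 by simp
    have B: "(lp_norm p (x - y))^2 \<le> C * (\<Sum>i\<in>UNIV. ((x - y)$i)^2)"
      unfolding C_def by (rule norm_bound[OF p0])
    have "\<alpha> * (lp_norm p (x - y))^2 \<le> \<alpha> * (C * (\<Sum>i\<in>UNIV. ((x - y)$i)^2))"
      using B apos by (intro mult_left_mono) auto
    also have "\<dots> = c0 * (\<Sum>i\<in>UNIV. ((x - y)$i)^2) / p"
      unfolding \<alpha>_def using Cpos p by (simp add: field_simps)
    also have "\<dots> \<le> d \<bullet> (x - y)" using A p by (simp add: divide_le_eq mult.commute)
    finally show ?thesis .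
  qed
  have "locally_uniformly_convex_at \<alpha> 2 (lp_ball p) (lp_norm p) x d"
    unfolding locally_uniformly_convex_at_def
  proof (intro ballI impI)
    fix \<epsilon> y assume e: "\<epsilon> \<in> {0..2}" and y: "y \<in> lp_ball p" and n: "lp_norm p (x - y) \<ge> \<epsilon>"
    have "\<epsilon>^2 \<le> (lp_norm p (x - y))^2" using e n by (intro power_mono) auto
    hence "\<alpha> * \<epsilon>^2 \<le> \<alpha> * (lp_norm p (x - y))^2" using apos by (intro mult_left_mono) auto
    thus "\<alpha> * \<epsilon>^2 \<le> d \<bullet> (x - y)" using key[OF y] by linarith
  qed
  thus ?thesis using apos unfolding d_def by blast
qed

end
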